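(* Two unital formal multiplications $F_1,F_2$ on $V$ are similar if and only if there exists a similarity $\Phi$ on $V$ such that $F_1(\mu\otimes\nu)=\sum F_2\big(\mu_{(1)}\otimes\Phi'(\mu_{(2)}\otimes\nu)\big)$ for all $\mu,\nu\in k[V]$ (i.e. $F_1(\mathbf{x},\mathbf{y})=F_2(\mathbf{x},\Phi(\mathbf{x},\mathbf{y}))$).
   Context: $k$ is a field of characteristic $0$; $k[V]$ is the symmetric algebra of $V$ with the coalgebra structure in which elements of $V$ are primitive, counit $\epsilon$ (degree-0 projection), $\pi_V$ the projection onto $V$, Sweedler notation; $k[V]_{\ge1}$ is the sum of symmetric powers of degree $\ge1$. A unital formal multiplication on $V$ is a linear map $F\colon k[V]\otimes k[V]\to V$ with $F(\mu\otimes1)=\pi_V(\mu)=F(1\otimes\mu)$. For a linear map $\Phi\colon k[V]\otimes k[V]\to V$ with $\Phi(1\otimes 1)=0$, $\Phi'(\xi)=\sum_{n\ge0}\frac1{n!}\Phi(\xi_{(1)})\cdots\Phi(\xi_{(n)})$ is the induced coalgebra morphism to $k[V]$. A similarity is a linear map $\Phi\colon k[V]\otimes k[V]\to V$ with $\Phi|_{1\otimes k[V]}=\pi_V$ and $\Phi|_{k[V]_{\ge1}\otimes(k1\oplus V)}=0$. Two unital formal multiplications are similar if their restrictions to $k[V]\otimes V$ coincide. *)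

theory Defs
  imports Main "HOL-Library.Poly_Mapping"
begin

(* V is modelled via a basis indexed by the type 'i:  V = 'i \<Rightarrow>\<^sub>0 'k.
   k[V] = polynomials in the variables x_i:  monomials 'i \<Rightarrow>\<^sub>0 nat,
   elements ('i \<Rightarrow>\<^sub>0 nat) \<Rightarrow>\<^sub>0 'k.
   A linear map k[V] \<otimes> k[V] \<rightarrow> V is given by its values on the basis
   x^a \<otimes> x^b of k[V] \<otimes> k[V]. *)

type_synonym 'i mon = "'i \<Rightarrow>\<^sub>0 nat"
type_synonym ('i,'k) vec = "'i \<Rightarrow>\<^sub>0 'k"
type_synonym ('i,'k) sym = "'i mon \<Rightarrow>\<^sub>0 'k"
type_synonym ('i,'k) bimap = "'i mon \<Rightarrow> 'i mon \<Rightarrow> ('i,'k) vec"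

definition mdeg :: "'i mon \<Rightarrow> nat" where
  "mdeg a = (\<Sum>i\<in>Poly_Mapping.keys a. Poly_Mapping.lookup a i)"

definition mfact :: "'i mon \<Rightarrow> nat" where
  "mfact a = (\<Prod>i\<in>Poly_Mapping.keys a. fact (Poly_Mapping.lookup a i))"

definition vsmul :: "'k::field \<Rightarrow> ('i,'k) vec \<Rightarrow> ('i,'k) vec" where
  "vsmul c v = Poly_Mapping.map (\<lambda>x. c * x) v"

definition psmul :: "'k::field \<Rightarrow> ('i,'k) sym \<Rightarrow> ('i,'k) sym" where
  "psmul c p = Poly_Mapping.map (\<lambda>x. c * x) p"

definition piV :: "'i mon \<Rightarrow> ('i,'k::field) vec" where
  "piV a = (if mdeg a = 1 then Poly_Mapping.map of_nat a else 0)"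

definition lin :: "('i,'k::field) vec \<Rightarrow> ('i,'k) sym" where
  "lin v = (\<Sum>i\<in>Poly_Mapping.keys v. Poly_Mapping.single (Poly_Mapping.single i 1) (Poly_Mapping.lookup v i))"

definition lin2 :: "('i,'k::field) bimap \<Rightarrow> ('i,'k) sym \<Rightarrow> ('i,'k) sym \<Rightarrow> ('i,'k) vec" where
  "lin2 F \<mu> \<nu> = (\<Sum>a\<in>Poly_Mapping.keys \<mu>. \<Sum>b\<in>Poly_Mapping.keys \<nu>. vsmul (Poly_Mapping.lookup \<mu> a * Poly_Mapping.lookup \<nu> b) (F a b))"

definition lin2r :: "('i,'k::field) bimap \<Rightarrow> 'i mon \<Rightarrow> ('i,'k) sym \<Rightarrow> ('i,'k) vec" where
  "lin2r F a p = (\<Sum>g\<in>Poly_Mapping.keys p. vsmul (Poly_Mapping.lookup p g) (F a g))"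

definition unital_formal_mult :: "('i,'k::field) bimap \<Rightarrow> bool" where
  "unital_formal_mult F \<longleftrightarrow> (\<forall>a. F a 0 = piV a \<and> F 0 a = piV a)"

definition similarity :: "('i,'k::field) bimap \<Rightarrow> bool" where
  "similarity \<Phi> \<longleftrightarrow> (\<forall>b. \<Phi> 0 b = piV b) \<and> (\<forall>a b. a \<noteq> 0 \<and> mdeg b \<le> 1 \<longrightarrow> \<Phi> a b = 0)"

(* restrictions to k[V] \<otimes> V coincide *)
definition similar :: "('i,'k::field) bimap \<Rightarrow> ('i,'k) bimap \<Rightarrow> bool" where
  "similar F1 F2 \<longleftrightarrow> (\<forall>a i. F1 a (Poly_Mapping.single i 1) = F2 a (Poly_Mapping.single i 1))"

(* n-fold decompositions of x^a \<otimes> x^b, indexing the (n-1)-fold iterated coproduct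
   Delta^(n)(x^a \<otimes> x^b) = sum (a!b!/prod (a_j! b_j!)) (x^a1\<otimes>x^b1) \<otimes> ... \<otimes> (x^an\<otimes>x^bn) *)
definition decomps :: "nat \<Rightarrow> 'i mon \<Rightarrow> 'i mon \<Rightarrow> ('i mon \<times> 'i mon) list set" where
  "decomps n a b = {ds. length ds = n \<and> sum_list (map fst ds) = a \<and> sum_list (map snd ds) = b}"

definition dcoef :: "'i mon \<Rightarrow> 'i mon \<Rightarrow> ('i mon \<times> 'i mon) list \<Rightarrow> 'k::field" where
  "dcoef a b ds = of_nat (mfact a * mfact b) / of_nat (prod_list (map (\<lambda>(x,y). mfact x * mfact y) ds))"

(* Phi'(x^a \<otimes> x^b) = sum_n 1/n! Phi(xi_(1)) ... Phi(xi_(n)).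
   Since Phi(1\<otimes>1) = 0 the terms with n > deg a + deg b vanish, so the sum is truncated there. *)
definition Phi' :: "('i,'k::field) bimap \<Rightarrow> 'i mon \<Rightarrow> 'i mon \<Rightarrow> ('i,'k) sym" where
  "Phi' \<Phi> a b = (\<Sum>n\<in>{..mdeg a + mdeg b}. \<Sum>ds\<in>decomps n a b.
      psmul (dcoef a b ds / of_nat (fact n)) (prod_list (map (\<lambda>(x,y). lin (\<Phi> x y)) ds)))"

(* basis value of  mu \<otimes> nu \<mapsto> sum F2(mu_(1) \<otimes> Phi'(mu_(2) \<otimes> nu)),
   using Delta(x^a) = sum_{a1+a2=a} a!/(a1! a2!) x^a1 \<otimes> x^a2 *)
definition twisted :: "('i,'k::field) bimap \<Rightarrow> ('i,'k) bimap \<Rightarrow> ('i,'k) bimap" where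
  "twisted F \<Phi> a b = (\<Sum>(a1,a2)\<in>{(a1,a2). a1 + a2 = a}.
      vsmul (of_nat (mfact a) / of_nat (mfact a1 * mfact a2)) (lin2r F a1 (Phi' \<Phi> a2 b)))"

end

theory Submission imports Defs "HOL-Library.FuncSet" begin

abbreviation e :: "'i \<Rightarrow> 'i mon" where "e i \<equiv> Poly_Mapping.single i (Suc 0)"

lemma lookup_vsmul[simp]: "Poly_Mapping.lookup (vsmul c v) i = c * Poly_Mapping.lookup v i"
  by (simp add: vsmul_def map.rep_eq when_def)

lemma lookup_psmul[simp]: "Poly_Mapping.lookup (psmul c v) i = c * Poly_Mapping.lookup v i"
  by (simp add: psmul_def map.rep_eq when_def)

lemma vsmul_1[simp]: "vsmul 1 v = v"
  by (rule poly_mapping_eqI) simp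

lemma vsmul_0[simp]: "vsmul c 0 = 0"
  by (rule poly_mapping_eqI) simp

lemma psmul_1[simp]: "psmul 1 v = v"
  by (rule poly_mapping_eqI) simp

lemma lin_0[simp]: "lin 0 = 0"
  by (simp add: lin_def)

lemma lin2r_0[simp]: "lin2r F a 0 = 0"
  by (simp add: lin2r_def)

lemma lin2r_single: "c \<noteq> 0 \<Longrightarrow> lin2r F a (Poly_Mapping.single g c) = vsmul c (F a g)"
  by (simp add: lin2r_def)

lemma mdeg_superset: "finite S \<Longrightarrow> Poly_Mapping.keys a \<subseteq> S \<Longrightarrow> mdeg a = (\<Sum>i\<in>S. Poly_Mapping.lookup a i)"
  unfolding mdeg_def by (rule sum.mono_neutral_left) (auto simp: in_keys_iff)

lemma mdeg_add[simp]: "mdeg (a + b) = mdeg a + mdeg b"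
proof -
  let ?S = "Poly_Mapping.keys a \<union> Poly_Mapping.keys b"
  have "mdeg (a+b) = (\<Sum>i\<in>?S. Poly_Mapping.lookup (a+b) i)"
    by (rule mdeg_superset) (auto dest: keys_add[THEN subsetD])
  also have "\<dots> = (\<Sum>i\<in>?S. Poly_Mapping.lookup a i) + (\<Sum>i\<in>?S. Poly_Mapping.lookup b i)"
    by (simp add: lookup_add sum.distrib)
  also have "\<dots> = mdeg a + mdeg b"
    by (simp add: mdeg_superset[symmetric])
  finally show ?thesis .
qed

lemma mdeg_0[simp]: "mdeg 0 = 0" by (simp add: mdeg_def)

lemma mdeg_eq_0[simp]: "mdeg a = 0 \<longleftrightarrow> a = 0"
  unfolding mdeg_def by (auto simp: in_keys_iff intro: poly_mapping_eqI)

lemma mdeg_pos[simp]: "0 < mdeg a \<longleftrightarrow> a \<noteq> 0"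
  using mdeg_eq_0[of a] by linarith

lemma mdeg_single[simp]: "mdeg (e i) = 1"
  by (simp add: mdeg_def)

lemma mdeg_sum_list: "mdeg (sum_list xs) = sum_list (map mdeg xs)"
  by (induct xs) auto

lemma mdeg_mem_le: "x \<in> set xs \<Longrightarrow> mdeg x \<le> mdeg (sum_list xs)"
  by (induct xs) auto

lemma mdeg1_single: assumes "mdeg g = 1" "Poly_Mapping.lookup g i \<noteq> 0"
  shows "g = e i"
proof -
  have ik: "i \<in> Poly_Mapping.keys g" using assms(2) by (simp add: in_keys_iff)
  have "mdeg g = Poly_Mapping.lookup g i + (\<Sum>j\<in>Poly_Mapping.keys g - {i}. Poly_Mapping.lookup g j)"
    unfolding mdeg_def using ik by (simp add: sum.remove)
  with assms have gi: "Poly_Mapping.lookup g i = 1" and r: "(\<Sum>j\<in>Poly_Mapping.keys g - {i}. Poly_Mapping.lookup g j) = 0"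
    by linarith+
  from r have r2: "\<forall>j\<in>Poly_Mapping.keys g - {i}. Poly_Mapping.lookup g j = 0" by simp
  have "Poly_Mapping.lookup g j = 0" if "j \<noteq> i" for j
  proof (cases "j \<in> Poly_Mapping.keys g")
    case True thus ?thesis using r2 that by blast
  qed (simp add: in_keys_iff)
  hence "\<And>j. j \<noteq> i \<Longrightarrow> Poly_Mapping.lookup g j = 0" by blast
  thus ?thesis using gi by (intro poly_mapping_eqI) (auto simp: lookup_single when_def)
qed

lemma mdeg_le1: "mdeg b \<le> 1 \<Longrightarrow> b = 0 \<or> (\<exists>i. b = e i)"
proof -
  assume "mdeg b \<le> 1"
  moreover {assume "mdeg b = 1"
    moreover obtain i where "Poly_Mapping.lookup b i \<noteq> 0" if "b \<noteq> 0"
      by (metis poly_mapping_eqI lookup_zero)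
    ultimately have ?thesis using mdeg1_single by fastforce}
  ultimately show ?thesis by (cases "mdeg b = 0") auto
qed

lemma mfact_0[simp]: "mfact 0 = 1" by (simp add: mfact_def)
lemma mfact_nz[simp]: "mfact a \<noteq> 0" by (simp add: mfact_def)


lemma e_eq_iff[simp]: "e i = e j \<longleftrightarrow> i = j"
  by (metis lookup_single_eq lookup_single_not_eq Zero_not_Suc)



lemma e_nz[simp]: "e i \<noteq> 0"
  by (metis lookup_single_eq lookup_zero Zero_not_Suc)

lemma finite_le_set: fixes a :: "'i mon"
  shows "finite {a1::'i mon. \<forall>i. Poly_Mapping.lookup a1 i \<le> Poly_Mapping.lookup a i}"
proof -
  define S where "S = {a1::'i mon. \<forall>i. Poly_Mapping.lookup a1 i \<le> Poly_Mapping.lookup a i}"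
  let ?S = S
  define h where "h = (\<lambda>a1::'i mon. restrict (Poly_Mapping.lookup a1) (Poly_Mapping.keys a))"
  let ?h = h
  have "?h ` ?S \<subseteq> PiE (Poly_Mapping.keys a) (\<lambda>i. {..Poly_Mapping.lookup a i})" by (auto simp: S_def h_def PiE_iff)
  hence "finite (?h ` ?S)" by (rule finite_subset) (simp add: finite_PiE)
  moreover have "inj_on ?h ?S"
  proof (rule inj_onI)
    fix x y assume x: "x \<in> ?S" and y: "y \<in> ?S" and h: "?h x = ?h y"
    show "x = y"
    proof (rule poly_mapping_eqI)
      fix i show "Poly_Mapping.lookup x i = Poly_Mapping.lookup y i"
      proof (cases "i \<in> Poly_Mapping.keys a")
        case True thus ?thesis using fun_cong[OF h, of i] by (simp add: h_def)
      next
        case False thus ?thesis using x y by (auto simp: in_keys_iff S_def) (metis le_zero_eq)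
      qed
    qed
  qed
  ultimately show ?thesis unfolding S_def[symmetric] by (rule finite_imageD)
qed

lemma finite_pairs: "finite {(a1,a2). a1 + a2 = (a::'i mon)}"
proof -
  let ?S = "{a1::'i mon. \<forall>i. Poly_Mapping.lookup a1 i \<le> Poly_Mapping.lookup a i}"
  have "{(a1,a2). a1 + a2 = a} \<subseteq> ?S \<times> ?S" by (auto simp: lookup_add)
  moreover have "finite (?S \<times> ?S)" using finite_le_set[of a] by simp
  ultimately show ?thesis by (rule finite_subset)
qed

lemma lookup_lin_e[simp]: "Poly_Mapping.lookup (lin v) (e i) = Poly_Mapping.lookup v i"
proof -
  have "Poly_Mapping.lookup (lin v) (e i) = (\<Sum>j\<in>Poly_Mapping.keys v. if j = i then Poly_Mapping.lookup v j else 0)"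
    unfolding lin_def lookup_sum by (intro sum.cong) (auto simp: lookup_single when_def)
  also have "\<dots> = Poly_Mapping.lookup v i" by (simp add: in_keys_iff)
  finally show ?thesis .
qed

lemma lookup_lin_other: "mdeg g \<noteq> 1 \<Longrightarrow> Poly_Mapping.lookup (lin v) g = 0"
  unfolding lin_def lookup_sum by (intro sum.neutral) (auto simp: lookup_single when_def)

lemma keys_lin: "g \<in> Poly_Mapping.keys (lin v) \<Longrightarrow> mdeg g = 1"
  using lookup_lin_other by (auto simp: in_keys_iff)

lemma keys_prod_lins: "g \<in> Poly_Mapping.keys (prod_list (map lin vs) :: ('i,'k::field) sym) \<Longrightarrow> mdeg g = length vs"
proof (induct vs arbitrary: g)
  case Nil thus ?case by simp
next
  case (Cons v vs)
  from Cons.prems obtain a b where "g = a + b" "a \<in> Poly_Mapping.keys (lin v)"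
     "b \<in> Poly_Mapping.keys (prod_list (map lin vs) :: ('i,'k) sym)"
    using keys_mult by fastforce
  thus ?case using Cons.hyps keys_lin by fastforce
qed

lemma lookup_piV: "Poly_Mapping.lookup (piV g) i = (if mdeg g = 1 then of_nat (Poly_Mapping.lookup g i) else 0)"
  by (simp add: piV_def map.rep_eq when_def)

lemma proj_lookup: fixes F :: "('i,'k::field) bimap"
  assumes F0: "\<forall>g. F 0 g = piV g"
  shows "Poly_Mapping.lookup (lin2r F 0 p) i = Poly_Mapping.lookup p (e i)"
proof -
  have "Poly_Mapping.lookup (lin2r F 0 p) i =
     (\<Sum>g\<in>Poly_Mapping.keys p. Poly_Mapping.lookup p g * Poly_Mapping.lookup (piV g) i)"
    unfolding lin2r_def lookup_sum using F0 by simp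
  also have "\<dots> = (\<Sum>g\<in>Poly_Mapping.keys p. if g = e i then Poly_Mapping.lookup p g else 0)"
  proof (intro sum.cong refl)
    fix g
    show "Poly_Mapping.lookup p g * Poly_Mapping.lookup (piV g) i = (if g = e i then Poly_Mapping.lookup p g else 0)"
    proof (cases "g = e i")
      case False
      hence "mdeg g = 1 \<Longrightarrow> Poly_Mapping.lookup g i = 0" using mdeg1_single[of g i] by blast
      hence "Poly_Mapping.lookup (piV g :: ('i,'k) vec) i = 0" by (auto simp: lookup_piV)
      thus ?thesis using False by simp
    qed (simp add: lookup_piV)
  qed
  also have "\<dots> = Poly_Mapping.lookup p (e i)" by (simp add: in_keys_iff)
  finally show ?thesis .
qed

lemma sum_single: "finite A \<Longrightarrow> m \<in> A \<Longrightarrow> (\<And>x. x \<in> A \<Longrightarrow> x \<noteq> m \<Longrightarrow> f x = 0) \<Longrightarrow> sum f A = f m"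
  by (simp add: sum.remove)

lemma prod_list_zero: "(0::'a::semiring_1) \<in> set xs \<Longrightarrow> prod_list xs = 0"
  by (induct xs) auto

lemma psmul_0[simp]: "psmul c 0 = 0"
  by (rule poly_mapping_eqI) simp

lemma prod_term_lookup: "length ds \<noteq> mdeg g \<Longrightarrow>
   Poly_Mapping.lookup (prod_list (map (\<lambda>(x,y). lin (\<Phi> x y)) ds) :: ('i,'k::field) sym) g = 0"
proof -
  assume "length ds \<noteq> mdeg g"
  have eq: "map (\<lambda>(x,y). lin (\<Phi> x y)) ds = map lin (map (\<lambda>(x,y). \<Phi> x y) ds)" by (induct ds) auto
  have "Poly_Mapping.lookup (prod_list (map lin (map (\<lambda>(x,y). \<Phi> x y) ds)) :: ('i,'k::field) sym) g \<noteq> 0 \<Longrightarrow> False"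
  proof -
    assume "Poly_Mapping.lookup (prod_list (map lin (map (\<lambda>(x,y). \<Phi> x y) ds)) :: ('i,'k::field) sym) g \<noteq> 0"
    hence "mdeg g = length (map (\<lambda>(x,y). \<Phi> x y) ds)" by (intro keys_prod_lins) (simp add: in_keys_iff)
    thus False using \<open>length ds \<noteq> mdeg g\<close> by simp
  qed
  thus ?thesis unfolding eq by blast
qed

lemma decomps_1: "decomps (Suc 0) a b = {[(a,b)]}"
  by (auto simp: decomps_def length_Suc_conv)

lemma decomps_0: "decomps 0 a b = (if a = 0 \<and> b = 0 then {[]} else {})"
  by (auto simp: decomps_def)

lemma dcoef_1[simp]: "dcoef a b [(a,b)] = (1::'k::field_char_0)"
  by (simp add: dcoef_def)

lemma dcoef_0[simp]: "dcoef 0 0 [] = (1::'k::field_char_0)"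
  by (simp add: dcoef_def)

lemma Phi'_proj:
  fixes \<Phi> :: "('i,'k::field_char_0) bimap"
  assumes "\<Phi> 0 0 = 0"
  shows "Poly_Mapping.lookup (Phi' \<Phi> a b) (e i) = Poly_Mapping.lookup (\<Phi> a b) i"
proof -
  let ?T = "\<lambda>n. \<Sum>ds\<in>decomps n a b. (dcoef a b ds / of_nat (fact n)) *
      Poly_Mapping.lookup (prod_list (map (\<lambda>(x,y). lin (\<Phi> x y)) ds) :: ('i,'k) sym) (e i)"
  have 1: "Poly_Mapping.lookup (Phi' \<Phi> a b) (e i) = (\<Sum>n\<in>{..mdeg a + mdeg b}. ?T n)"
    unfolding Phi'_def lookup_sum by simp
  have 2: "?T n = 0" if "n \<noteq> 1" for n
  proof (intro sum.neutral ballI)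
    fix ds assume "ds \<in> decomps n a b"
    hence "length ds \<noteq> mdeg (e i)" using that by (simp add: decomps_def)
    thus "(dcoef a b ds / of_nat (fact n)) *
      Poly_Mapping.lookup (prod_list (map (\<lambda>(x,y). lin (\<Phi> x y)) ds) :: ('i,'k) sym) (e i) = 0"
      using prod_term_lookup[of ds "e i" \<Phi>] by simp
  qed
  have 3: "?T 1 = Poly_Mapping.lookup (\<Phi> a b) i" by (simp add: decomps_1)
  show ?thesis
  proof (cases "mdeg a + mdeg b = 0")
    case True
    hence ab: "a = 0" "b = 0" by auto
    have "Poly_Mapping.lookup (Phi' \<Phi> a b) (e i) = ?T 0" unfolding 1 by (simp add: True)
    also have "?T 0 = 0" by (rule 2) simp
    finally show ?thesis using ab assms by simp
  next
    case False
    hence m: "1 \<in> {..mdeg a + mdeg b}" by (simp only: atMost_iff)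
    show ?thesis unfolding 1 3[symmetric] by (rule sum_single[OF _ m], simp, rule 2, simp)
  qed
qed

lemma Phi'_b0:
  fixes \<Phi> :: "('i,'k::field_char_0) bimap"
  assumes H: "\<And>c. mdeg c \<le> mdeg a \<Longrightarrow> \<Phi> c 0 = 0"
  shows "Phi' \<Phi> a 0 = (if a = 0 then 1 else 0)"
proof -
  let ?T = "\<lambda>n. \<Sum>ds\<in>decomps n a 0. psmul (dcoef a 0 ds / of_nat (fact n)) (prod_list (map (\<lambda>(x,y). lin (\<Phi> x y)) ds))"
  have 2: "?T n = 0" if nz: "n \<noteq> 0" for n
  proof (intro sum.neutral ballI)
    fix ds assume ds: "ds \<in> decomps n a 0"
    then obtain d ds' where dd: "ds = d # ds'" using nz by (cases ds) (auto simp: decomps_def)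
    obtain x y where d: "d = (x,y)" by fastforce
    have "mdeg y \<le> mdeg (0::'i mon)" using ds mdeg_mem_le[of y "map snd ds"] by (simp add: decomps_def dd d)
    hence y: "y = 0" by simp
    have "mdeg x \<le> mdeg a" using ds mdeg_mem_le[of x "map fst ds"] by (simp add: decomps_def dd d)
    hence "\<Phi> x y = 0" using H y by simp
    hence "prod_list (map (\<lambda>(x,y). lin (\<Phi> x y)) ds) = 0" by (simp add: dd d)
    thus "psmul (dcoef a 0 ds / of_nat (fact n)) (prod_list (map (\<lambda>(x,y). lin (\<Phi> x y)) ds)) = 0" by simp
  qed
  have "Phi' \<Phi> a 0 = (\<Sum>n\<in>{..mdeg a + mdeg (0::'i mon)}. ?T n)" unfolding Phi'_def by (rule refl)
  also have "\<dots> = ?T 0" by (intro sum_single 2) auto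
  also have "\<dots> = (if a = 0 then 1 else 0)" by (simp add: decomps_0)
  finally show ?thesis .
qed

lemma len_le_mdeg: "(\<forall>y\<in>set ys. y \<noteq> 0) \<Longrightarrow> length ys \<le> mdeg (sum_list ys)"
proof (induct ys)
  case (Cons y ys)
  hence "1 \<le> mdeg y" by (cases "mdeg y") auto
  thus ?case using Cons by simp
qed simp

lemma piV_e[simp]: "piV (e i) = Poly_Mapping.single i (1::'k::field)"
  by (rule poly_mapping_eqI) (simp add: lookup_piV lookup_single when_def)

lemma lin_single1[simp]: "lin (Poly_Mapping.single i (1::'k::field)) = Poly_Mapping.single (e i) 1"
  by (simp add: lin_def)

lemma Phi'_ei:
  fixes \<Phi> :: "('i,'k::field_char_0) bimap"
  assumes H: "\<And>c. mdeg c \<le> mdeg a \<Longrightarrow> \<Phi> c 0 = 0"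
    and H2: "\<And>c. mdeg c \<le> mdeg a \<Longrightarrow> c \<noteq> 0 \<Longrightarrow> \<Phi> c (e i) = 0"
    and H3: "\<Phi> 0 (e i) = piV (e i)"
  shows "Phi' \<Phi> a (e i) = (if a = 0 then Poly_Mapping.single (e i) 1 else 0)"
proof -
  let ?T = "\<lambda>n. \<Sum>ds\<in>decomps n a (e i). psmul (dcoef a (e i) ds / of_nat (fact n)) (prod_list (map (\<lambda>(x,y). lin (\<Phi> x y)) ds))"
  have 2: "?T n = 0" if "n \<noteq> 1" for n
  proof (intro sum.neutral ballI)
    fix ds assume ds: "ds \<in> decomps n a (e i)"
    have "n \<noteq> 0" using ds by (auto simp: decomps_def)
    with that have n2: "2 \<le> length ds" using ds by (simp add: decomps_def)
    have "\<exists>y\<in>set (map snd ds). y = 0"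
    proof (rule ccontr)
      assume "\<not> ?thesis"
      hence "length (map snd ds) \<le> mdeg (sum_list (map snd ds))" by (intro len_le_mdeg) auto
      thus False using ds n2 by (simp add: decomps_def)
    qed
    then obtain x where xin: "(x,0) \<in> set ds" by auto
    have "mdeg x \<le> mdeg a" using ds mdeg_mem_le[of x "map fst ds"] xin
      by (force simp: decomps_def)
    hence "lin (\<Phi> x 0) = 0" using H by simp
    hence "0 \<in> set (map (\<lambda>(x,y). lin (\<Phi> x y)) ds)" using xin by force
    hence "prod_list (map (\<lambda>(x,y). lin (\<Phi> x y)) ds) = 0" by (rule prod_list_zero)
    thus "psmul (dcoef a (e i) ds / of_nat (fact n)) (prod_list (map (\<lambda>(x,y). lin (\<Phi> x y)) ds)) = 0" by simp
  qed
  have "Phi' \<Phi> a (e i) = (\<Sum>n\<in>{..mdeg a + mdeg (e i)}. ?T n)" unfolding Phi'_def by (rule refl)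
  also have "\<dots> = ?T 1" by (intro sum_single 2) auto
  also have "\<dots> = lin (\<Phi> a (e i))" by (simp add: decomps_1)
  also have "\<dots> = (if a = 0 then Poly_Mapping.single (e i) 1 else 0)" using H2 H3 by simp
  finally show ?thesis .
qed

definition Rt :: "('i,'k::field) bimap \<Rightarrow> ('i,'k) bimap \<Rightarrow> 'i mon \<Rightarrow> 'i mon \<Rightarrow> ('i,'k) vec" where
  "Rt F \<Phi> a b = (\<Sum>(a1,a2)\<in>{(a1,a2). a1 + a2 = a \<and> a1 \<noteq> 0}.
      vsmul (of_nat (mfact a) / of_nat (mfact a1 * mfact a2)) (lin2r F a1 (Phi' \<Phi> a2 b)))"

lemma finite_pairs': "finite {(a1,a2). a1 + a2 = (a::'i mon) \<and> a1 \<noteq> 0}"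
  by (rule finite_subset[OF _ finite_pairs[of a]]) auto

lemma add_eq_0_mon: "(a1::'i mon) + a2 = 0 \<Longrightarrow> a1 = 0 \<and> a2 = 0"
proof -
  assume "a1 + a2 = 0"
  hence "mdeg (a1 + a2) = 0" by simp
  thus ?thesis by simp
qed

lemma twisted_split:
  fixes F \<Phi> :: "('i,'k::field_char_0) bimap"
  assumes F0: "\<forall>g. F 0 g = piV g" and P0: "\<Phi> 0 0 = 0"
  shows "twisted F \<Phi> a b = \<Phi> a b + Rt F \<Phi> a b"
proof -
  let ?f = "\<lambda>(a1,a2). vsmul (of_nat (mfact a) / of_nat (mfact a1 * mfact a2)) (lin2r F a1 (Phi' \<Phi> a2 b))"
  have mem: "(0,a) \<in> {(a1,a2). a1 + a2 = a}" by simp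
  have "twisted F \<Phi> a b = ?f (0,a) + sum ?f ({(a1,a2). a1 + a2 = a} - {(0,a)})"
    unfolding twisted_def by (rule sum.remove[OF finite_pairs mem])
  also have "{(a1,a2). a1 + a2 = a} - {(0,a)} = {(a1,a2). a1 + a2 = a \<and> a1 \<noteq> 0}" by auto
  also have "?f (0,a) = lin2r F 0 (Phi' \<Phi> a b)" by simp
  also have "lin2r F 0 (Phi' \<Phi> a b) = \<Phi> a b"
    by (rule poly_mapping_eqI) (simp add: proj_lookup[of F, OF F0] Phi'_proj[of \<Phi>, OF P0])
  finally show ?thesis unfolding Rt_def by simp
qed

lemma Phi'_local:
  assumes "\<And>c d. mdeg c \<le> mdeg a \<Longrightarrow> \<Phi> c d = \<Psi> c d"
  shows "Phi' \<Phi> a b = Phi' \<Psi> a b"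
  unfolding Phi'_def
proof (intro sum.cong refl arg_cong[where f="psmul _"] arg_cong[where f=prod_list] map_cong)
  fix n ds xy assume ds: "ds \<in> decomps n a b" and xy: "xy \<in> set ds"
  obtain x y where xy': "xy = (x,y)" by fastforce
  have "mdeg x \<le> mdeg a" using ds xy mdeg_mem_le[of x "map fst ds"] by (force simp: decomps_def xy')
  thus "(case xy of (x, y) \<Rightarrow> lin (\<Phi> x y)) = (case xy of (x, y) \<Rightarrow> lin (\<Psi> x y))"
    using assms by (simp add: xy')
qed

lemma Rt_local:
  assumes "\<And>c d. mdeg c < mdeg a \<Longrightarrow> \<Phi> c d = \<Psi> c d"
  shows "Rt F \<Phi> a b = Rt F \<Psi> a b"
  unfolding Rt_def
proof (intro sum.cong refl)
  fix p assume "p \<in> {(a1,a2). a1 + a2 = a \<and> a1 \<noteq> 0}"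
  then obtain a1 a2 where p: "p = (a1,a2)" "a1 + a2 = a" "a1 \<noteq> 0" by auto
  hence "mdeg a2 < mdeg a" by auto
  hence "Phi' \<Phi> a2 b = Phi' \<Psi> a2 b" by (intro Phi'_local assms) simp
  thus "(case p of (a1, a2) \<Rightarrow> vsmul (of_nat (mfact a) / of_nat (mfact a1 * mfact a2)) (lin2r F a1 (Phi' \<Phi> a2 b))) =
        (case p of (a1, a2) \<Rightarrow> vsmul (of_nat (mfact a) / of_nat (mfact a1 * mfact a2)) (lin2r F a1 (Phi' \<Psi> a2 b)))"
    by (simp add: p)
qed

lemma Rt_zero: "Rt F \<Phi> 0 b = 0"
  unfolding Rt_def by (rule sum.neutral) (auto dest: add_eq_0_mon)

lemma lin2r_one: "lin2r F a 1 = F a 0"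
  by (simp add: lin2r_def)

lemma Rt_b0:
  fixes F \<Phi> :: "('i,'k::field_char_0) bimap"
  assumes a: "a \<noteq> 0" and H: "\<And>c. mdeg c < mdeg a \<Longrightarrow> \<Phi> c 0 = 0"
  shows "Rt F \<Phi> a 0 = F a 0"
proof -
  let ?f = "\<lambda>(a1,a2). vsmul (of_nat (mfact a) / of_nat (mfact a1 * mfact a2)) (lin2r F a1 (Phi' \<Phi> a2 0))"
  have "Rt F \<Phi> a 0 = ?f (a,0)" unfolding Rt_def
  proof (rule sum_single[OF finite_pairs'])
    show "(a,0) \<in> {(a1,a2). a1 + a2 = a \<and> a1 \<noteq> 0}" using a by simp
  next
    fix p assume p: "p \<in> {(a1,a2). a1 + a2 = a \<and> a1 \<noteq> 0}" "p \<noteq> (a,0)"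
    then obtain a1 a2 where pp0: "p = (a1,a2)" "a1 + a2 = a" "a1 \<noteq> 0" by auto
    have "a2 \<noteq> 0" using pp0 p(2) by auto
    note pp = pp0 this
    have lt: "mdeg a2 < mdeg a" using pp by auto
    have h1: "\<And>c. mdeg c \<le> mdeg a2 \<Longrightarrow> \<Phi> c 0 = 0" using lt H by (meson le_less_trans)
    have "Phi' \<Phi> a2 0 = 0" using pp by (subst Phi'_b0[of a2 \<Phi>, OF h1]) auto
    thus "?f p = 0" by (simp add: pp)
  qed
  also have "\<dots> = F a 0"
  proof -
    have lt: "mdeg (0::'i mon) < mdeg a" using a by simp
    have h1: "\<And>c. mdeg c \<le> mdeg (0::'i mon) \<Longrightarrow> \<Phi> c 0 = 0" using lt H by (meson le_less_trans)
    have "Phi' \<Phi> 0 0 = 1" by (subst Phi'_b0[of 0 \<Phi>, OF h1]) auto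
    thus ?thesis by (simp add: lin2r_one)
  qed
  finally show ?thesis .
qed

lemma Rt_ei:
  fixes F \<Phi> :: "('i,'k::field_char_0) bimap"
  assumes a: "a \<noteq> 0" and H: "\<And>c. mdeg c < mdeg a \<Longrightarrow> \<Phi> c 0 = 0"
    and H2: "\<And>c. mdeg c < mdeg a \<Longrightarrow> c \<noteq> 0 \<Longrightarrow> \<Phi> c (e i) = 0"
    and H3: "\<Phi> 0 (e i) = piV (e i)"
  shows "Rt F \<Phi> a (e i) = F a (e i)"
proof -
  let ?f = "\<lambda>(a1,a2). vsmul (of_nat (mfact a) / of_nat (mfact a1 * mfact a2)) (lin2r F a1 (Phi' \<Phi> a2 (e i)))"
  have "Rt F \<Phi> a (e i) = ?f (a,0)" unfolding Rt_def
  proof (rule sum_single[OF finite_pairs'])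
    show "(a,0) \<in> {(a1,a2). a1 + a2 = a \<and> a1 \<noteq> 0}" using a by simp
  next
    fix p assume p: "p \<in> {(a1,a2). a1 + a2 = a \<and> a1 \<noteq> 0}" "p \<noteq> (a,0)"
    then obtain a1 a2 where pp0: "p = (a1,a2)" "a1 + a2 = a" "a1 \<noteq> 0" by auto
    have "a2 \<noteq> 0" using pp0 p(2) by auto
    note pp = pp0 this
    have lt: "mdeg a2 < mdeg a" using pp by auto
    have h1: "\<And>c. mdeg c \<le> mdeg a2 \<Longrightarrow> \<Phi> c 0 = 0" using lt H by (meson le_less_trans)
    have h2: "\<And>c. mdeg c \<le> mdeg a2 \<Longrightarrow> c \<noteq> 0 \<Longrightarrow> \<Phi> c (e i) = 0" using lt H2 by (meson le_less_trans)
    have "Phi' \<Phi> a2 (e i) = 0" using pp by (subst Phi'_ei[of a2 \<Phi> i, OF h1 h2 H3]) auto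
    thus "?f p = 0" by (simp add: pp)
  qed
  also have "\<dots> = F a (e i)"
  proof -
    have lt: "mdeg (0::'i mon) < mdeg a" using a by simp
    have h1: "\<And>c. mdeg c \<le> mdeg (0::'i mon) \<Longrightarrow> \<Phi> c 0 = 0" using lt H by (meson le_less_trans)
    have h2: "\<And>c. mdeg c \<le> mdeg (0::'i mon) \<Longrightarrow> c \<noteq> 0 \<Longrightarrow> \<Phi> c (e i) = 0" using lt H2 by (meson le_less_trans)
    have "Phi' \<Phi> 0 (e i) = Poly_Mapping.single (e i) 1" by (subst Phi'_ei[of 0 \<Phi> i, OF h1 h2 H3]) auto
    thus ?thesis by (simp add: lin2r_single)
  qed
  finally show ?thesis .
qed

lemma lin2_single: "lin2 F (Poly_Mapping.single a 1) (Poly_Mapping.single b 1) = F a b"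
  by (simp add: lin2_def)

theorem mainTheorem5:
  fixes F1 F2 :: "('i, 'k::field_char_0) bimap"
  assumes "unital_formal_mult F1" and "unital_formal_mult F2"
  shows "similar F1 F2 \<longleftrightarrow>
    (\<exists>\<Phi>. similarity \<Phi> \<and> (\<forall>\<mu> \<nu>. lin2 F1 \<mu> \<nu> = lin2 (twisted F2 \<Phi>) \<mu> \<nu>))"
proof
  have U1: "\<And>a. F1 a 0 = piV a" "\<And>a. F1 0 a = piV a" using assms(1) by (auto simp: unital_formal_mult_def)
  have U2: "\<And>a. F2 a 0 = piV a" "\<And>a. F2 0 a = piV a" using assms(2) by (auto simp: unital_formal_mult_def)
  have F20: "\<forall>g. F2 0 g = piV g" using U2 by simp
  have piV0: "piV (0::'i mon) = (0::('i,'k) vec)" by (simp add: piV_def)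
  {
    assume sim: "similar F1 F2"
    hence simi: "\<And>a i. F1 a (e i) = F2 a (e i)" by (simp add: similar_def)
    define H where "H = (\<lambda>(f::'i mon \<times> 'i mon \<Rightarrow> ('i,'k) vec) p. F1 (fst p) (snd p) - Rt F2 (\<lambda>c d. f (c,d)) (fst p) (snd p))"
    define Rel where "Rel = inv_image less_than (\<lambda>p::'i mon \<times> 'i mon. mdeg (fst p))"
    define g where "g = wfrec Rel H"
    define \<Phi> where "\<Phi> = (\<lambda>c d. g (c,d))"
    have wfR: "wf Rel" unfolding Rel_def by simp
    have \<Phi>_eq: "\<Phi> a b = F1 a b - Rt F2 \<Phi> a b" for a b
    proof -
      have "\<Phi> a b = H (cut g Rel (a,b)) (a,b)" unfolding \<Phi>_def g_def by (rule wfrec[OF wfR])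
      also have "\<dots> = F1 a b - Rt F2 (\<lambda>c d. cut g Rel (a,b) (c,d)) a b" by (simp add: H_def)
      also have "Rt F2 (\<lambda>c d. cut g Rel (a,b) (c,d)) a b = Rt F2 \<Phi> a b"
        by (rule Rt_local) (simp add: cut_apply Rel_def \<Phi>_def)
      finally show ?thesis .
    qed
    have S1: "\<Phi> 0 b = piV b" for b using \<Phi>_eq[of 0 b] by (simp add: Rt_zero U1)
    have P00: "\<Phi> 0 0 = 0" using S1[of 0] piV0 by simp
    have S2: "\<forall>a. mdeg a = n \<longrightarrow> a \<noteq> 0 \<longrightarrow> \<Phi> a 0 = 0 \<and> (\<forall>i. \<Phi> a (e i) = 0)" for n
    proof (induction n rule: less_induct)
      case (less n)
      show ?case
      proof (intro allI impI)
        fix a :: "'i mon" assume an: "mdeg a = n" and a: "a \<noteq> 0"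
        have H1: "\<And>c. mdeg c < mdeg a \<Longrightarrow> \<Phi> c 0 = 0"
          using less.IH an P00 by (metis)
        have H2: "\<And>c i. mdeg c < mdeg a \<Longrightarrow> c \<noteq> 0 \<Longrightarrow> \<Phi> c (e i) = 0"
          using less.IH an by metis
        have "\<Phi> a 0 = 0" using \<Phi>_eq[of a 0] Rt_b0[where F=F2 and \<Phi>=\<Phi> and a=a, OF a H1] by (simp add: U1 U2)
        moreover have "\<Phi> a (e i) = 0" for i
          using \<Phi>_eq[of a "e i"] Rt_ei[where F=F2 and \<Phi>=\<Phi> and a=a and i=i, OF a H1 H2 S1] simi[of a i] by simp
        ultimately show "\<Phi> a 0 = 0 \<and> (\<forall>i. \<Phi> a (e i) = 0)" by blast
      qed
    qed
    have simil: "similarity \<Phi>"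
      unfolding similarity_def
    proof (intro conjI allI impI)
      fix b show "\<Phi> 0 b = piV b" by (rule S1)
    next
      fix a b :: "'i mon" assume ab: "a \<noteq> 0 \<and> mdeg b \<le> 1"
      thus "\<Phi> a b = 0" using S2[of "mdeg a"] mdeg_le1[of b] by auto
    qed
    have tw: "twisted F2 \<Phi> = F1"
    proof (intro ext)
      fix a b
      show "twisted F2 \<Phi> a b = F1 a b" using twisted_split[where F=F2 and \<Phi>=\<Phi> and a=a and b=b, OF F20 P00] \<Phi>_eq[of a b] by simp
    qed
    show "\<exists>\<Phi>. similarity \<Phi> \<and> (\<forall>\<mu> \<nu>. lin2 F1 \<mu> \<nu> = lin2 (twisted F2 \<Phi>) \<mu> \<nu>)"
      using simil tw by auto
  }
  {
    assume "\<exists>\<Phi>. similarity \<Phi> \<and> (\<forall>\<mu> \<nu>. lin2 F1 \<mu> \<nu> = lin2 (twisted F2 \<Phi>) \<mu> \<nu>)"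
    then obtain \<Phi> where simil: "similarity \<Phi>" and eq: "\<forall>\<mu> \<nu>. lin2 F1 \<mu> \<nu> = lin2 (twisted F2 \<Phi>) \<mu> \<nu>" by blast
    have S1: "\<And>b. \<Phi> 0 b = piV b" and S2: "\<And>a b. a \<noteq> 0 \<Longrightarrow> mdeg b \<le> 1 \<Longrightarrow> \<Phi> a b = 0"
      using simil by (auto simp: similarity_def)
    have P00: "\<Phi> 0 0 = 0" using S1[of 0] piV0 by simp
    have F1tw: "F1 a b = twisted F2 \<Phi> a b" for a b
      using eq lin2_single[of F1 a b] lin2_single[of "twisted F2 \<Phi>" a b] by metis
    have H1: "\<And>c. \<Phi> c 0 = 0" using S1 S2 P00 by (metis mdeg_0 zero_le)
    have H2: "\<And>c i. c \<noteq> 0 \<Longrightarrow> \<Phi> c (e i) = 0" using S2 by simp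
    show "similar F1 F2" unfolding similar_def
    proof (intro allI)
      fix a i
      show "F1 a (Poly_Mapping.single i 1) = F2 a (Poly_Mapping.single i 1)"
      proof (cases "a = 0")
        case True thus ?thesis by (simp add: U1 U2)
      next
        case False
        have "F1 a (e i) = \<Phi> a (e i) + Rt F2 \<Phi> a (e i)" using F1tw twisted_split[where F=F2 and \<Phi>=\<Phi> and a=a and b="e i", OF F20 P00] by simp
        also have "\<dots> = F2 a (e i)" using Rt_ei[where F=F2 and \<Phi>=\<Phi> and a=a and i=i, OF False H1 H2 S1] H2[OF False] by simp
        finally show ?thesis by simp
      qed
    qed
  }
qed

end
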